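(* For every positive integer $n$, \[ p^{(2)}(n) = \sum_{\pi\in\mathcal{D}(n)} (-1)^{\#(\pi)}\, s(\pi)\bigl(\ell(\pi)-s(\pi)\bigr). \]
   Context: $p^{(2)}(n)$ is the number of partitions of $n$ having exactly two distinct part sizes. $\mathcal{D}(n)$ is the set of partitions of $n$ into distinct parts; for a partition $\pi$, $s(\pi)$ is its smallest part, $\ell(\pi)$ its largest part and $\#(\pi)$ its number of parts. *)

theory Defs
  imports Main "HOL-Library.Multiset"
begin

definition partitions :: "nat \<Rightarrow> nat multiset set" where
  "partitions n = {p. (\<forall>x \<in># p. x > 0) \<and> sum_mset p = n}"

definition p2 :: "nat \<Rightarrow> nat" where
  "p2 n = card {p \<in> partitions n. card (set_mset p) = 2}"

definition distinct_partitions :: "nat \<Rightarrow> nat multiset set" where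
  "distinct_partitions n = {p \<in> partitions n. \<forall>x. count p x \<le> 1}"

definition smallest_part :: "nat multiset \<Rightarrow> nat" where
  "smallest_part p = Min (set_mset p)"

definition largest_part :: "nat multiset \<Rightarrow> nat" where
  "largest_part p = Max (set_mset p)"

definition num_parts :: "nat multiset \<Rightarrow> nat" where
  "num_parts p = size p"

end

theory Submission
  imports Defs "HOL-Computational_Algebra.Formal_Power_Series"
begin


definition ser :: "nat \<Rightarrow> (nat \<Rightarrow> int) \<Rightarrow> int fps" where
  "ser j h = Abs_fps (\<lambda>n. if j dvd n then h (n div j) else 0)"

lemma ser_nth: "fps_nth (ser j h) n = (if j dvd n then h (n div j) else 0)"
  by (simp add: ser_def)

lemma dvd_sum:
  fixes j n :: nat and f :: "nat \<Rightarrow> int"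
  assumes "j > 0"
  shows "(\<Sum>i=0..n. if j dvd i then f (i div j) else (0::int)) = (\<Sum>k=0..n div j. f k)"
proof -
  have "(\<Sum>i=0..n. if j dvd i then f (i div j) else (0::int)) = (\<Sum>i\<in>{i\<in>{0..n}. j dvd i}. f (i div j))"
    by (subst sum.inter_filter) auto
  also have "{i\<in>{0..n}. j dvd i} = (\<lambda>k. j*k) ` {0..n div j}"
  proof
    show "{i \<in> {0..n}. j dvd i} \<subseteq> (*) j ` {0..n div j}"
    proof
      fix i assume "i \<in> {i \<in> {0..n}. j dvd i}"
      then obtain k where "i = j*k" "i \<le> n" by auto
      then have "k \<le> n div j" using assms by (metis div_le_mono nonzero_mult_div_cancel_left not_gr0)
      then show "i \<in> (*) j ` {0..n div j}" using \<open>i = j*k\<close> by auto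
    qed
    show "(*) j ` {0..n div j} \<subseteq> {i \<in> {0..n}. j dvd i}"
    proof
      fix i assume "i \<in> (*) j ` {0..n div j}"
      then obtain k where k0: "k \<in> {0..n div j}" and k: "i = j*k" by (rule imageE)
      have "j * k \<le> j * (n div j)" using k0 by simp
      also have "\<dots> \<le> n" by simp
      finally show "i \<in> {i \<in> {0..n}. j dvd i}" using k by auto
    qed
  qed
  also have "(\<Sum>i\<in>(\<lambda>k. j*k) ` {0..n div j}. f (i div j)) = (\<Sum>k=0..n div j. f k)"
    using assms by (subst sum.reindex) (auto simp: inj_on_def)
  finally show ?thesis .
qed

definition conv :: "(nat \<Rightarrow> int) \<Rightarrow> (nat \<Rightarrow> int) \<Rightarrow> nat \<Rightarrow> int" where
  "conv h1 h2 k = (\<Sum>i=0..k. h1 i * h2 (k-i))"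

lemma ser_mult:
  assumes j: "j > 0"
  shows "ser j h1 * ser j h2 = ser j (conv h1 h2)"
proof (rule fps_ext)
  fix n
  show "fps_nth (ser j h1 * ser j h2) n = fps_nth (ser j (conv h1 h2)) n"
  proof (cases "j dvd n")
    case True
    then obtain k where n: "n = j*k" by (auto simp: dvd_def)
    have "fps_nth (ser j h1 * ser j h2) n =
       (\<Sum>i=0..n. if j dvd i then h1 (i div j) * h2 (k - i div j) else 0)"
      unfolding fps_mult_nth ser_nth
    proof (rule sum.cong[OF refl])
      fix i assume i: "i \<in> {0..n}"
      show "(if j dvd i then h1 (i div j) else 0) * (if j dvd (n - i) then h2 ((n - i) div j) else 0) =
            (if j dvd i then h1 (i div j) * h2 (k - i div j) else 0)"
      proof (cases "j dvd i")
        case True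
        then obtain a where a: "i = j*a" by (auto simp: dvd_def)
        have "n - i = j * (k - a)" using n a by (simp add: diff_mult_distrib2)
        then show ?thesis using a j True by simp
      qed simp
    qed
    also have "\<dots> = (\<Sum>a=0..n div j. h1 a * h2 (k - a))"
      using j by (rule dvd_sum)
    also have "\<dots> = fps_nth (ser j (conv h1 h2)) n"
      using j n by (simp add: ser_nth conv_def)
    finally show ?thesis .
  next
    case False
    have "fps_nth (ser j h1 * ser j h2) n = 0"
      unfolding fps_mult_nth ser_nth
    proof (rule sum.neutral, rule ballI)
      fix i assume i: "i \<in> {0..n}"
      have "\<not> (j dvd i \<and> j dvd (n - i))"
        using False i by (metis atLeastAtMost_iff dvd_add le_add_diff_inverse)
      then show "(if j dvd i then h1 (i div j) else 0) * (if j dvd (n - i) then h2 ((n - i) div j) else 0) = 0"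
        by auto
    qed
    then show ?thesis using False by (simp add: ser_nth)
  qed
qed

definition MS :: "nat set \<Rightarrow> nat \<Rightarrow> nat multiset set" where
  "MS S m = {p. set_mset p \<subseteq> S \<and> sum_mset p = m}"

lemma size_le_sum: "(\<forall>x\<in>#p. x > (0::nat)) \<Longrightarrow> size p \<le> sum_mset p"
  by (induction p) auto

lemma finite_MS:
  assumes "finite S" "0 \<notin> S"
  shows "finite (MS S m)"
proof -
  have "MS S m \<subseteq> mset ` {xs. set xs \<subseteq> S \<and> length xs \<le> m}"
  proof
    fix p assume p: "p \<in> MS S m"
    obtain xs where xs: "mset xs = p" using ex_mset by blast
    have "\<forall>x\<in>#p. x > 0"
    proof
      fix x assume "x \<in># p"
      then have "x \<in> S" using p by (auto simp: MS_def)
      then show "x > 0" using assms(2) by (cases x) auto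
    qed
    then have "size p \<le> m" using p size_le_sum unfolding MS_def by fastforce
    then show "p \<in> mset ` {xs. set xs \<subseteq> S \<and> length xs \<le> m}"
      using xs p unfolding MS_def by auto
  qed
  moreover have "finite (mset ` {xs. set xs \<subseteq> S \<and> length xs \<le> m})"
    using finite_lists_length_le[OF assms(1)] by blast
  ultimately show ?thesis by (rule finite_subset)
qed

lemma split_mset: "p = filter_mset (\<lambda>x. x \<noteq> j) p + replicate_mset (count p j) j"
  by (auto simp: multiset_eq_iff)

lemma sum_split_mset: "sum_mset p = sum_mset (filter_mset (\<lambda>x. x \<noteq> j) p) + count p j * (j::nat)"
  by (subst split_mset[of p j]) simp

lemma prod_ser:
  assumes "finite S" "0 \<notin> S"
  shows "fps_nth (\<Prod>j\<in>S. ser j (h j)) m = (\<Sum>p\<in>MS S m. \<Prod>j\<in>S. h j (count p j))"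
  using assms
proof (induction S arbitrary: m rule: finite_induct)
  case empty
  have "MS {} m = (if m = 0 then {{#}} else {})" by (auto simp: MS_def)
  then show ?case by simp
next
  case (insert j S)
  have j: "j > 0" using insert.prems by auto
  have S0: "0 \<notin> S" using insert.prems by auto
  let ?P = "\<Prod>i\<in>S. ser i (h i)"
  let ?F = "\<lambda>p. \<Prod>i\<in>S. h i (count p i)"
  have "fps_nth (\<Prod>i\<in>insert j S. ser i (h i)) m = fps_nth (ser j (h j) * ?P) m"
    using insert.hyps by simp
  also have "\<dots> = (\<Sum>i=0..m. if j dvd i then h j (i div j) * fps_nth ?P (m - j * (i div j)) else 0)"
    unfolding fps_mult_nth ser_nth by (rule sum.cong) auto
  also have "\<dots> = (\<Sum>k=0..m div j. h j k * fps_nth ?P (m - j * k))"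
    using j by (rule dvd_sum)
  also have "\<dots> = (\<Sum>k=0..m div j. \<Sum>p\<in>MS S (m - j*k). h j k * ?F p)"
    using insert.IH[OF S0] by (simp add: sum_distrib_left)
  also have "\<dots> = (\<Sum>(k,p)\<in>(SIGMA k:{0..m div j}. MS S (m - j*k)). h j k * ?F p)"
    by (rule sum.Sigma) (simp_all add: finite_MS[OF insert.hyps(1) S0])
  also have "\<dots> = (\<Sum>p\<in>MS (insert j S) m. h j (count p j) * ?F p)"
  proof (rule sum.reindex_bij_witness[where i = "\<lambda>p. (count p j, filter_mset (\<lambda>x. x \<noteq> j) p)"
        and j = "\<lambda>(k,p). p + replicate_mset k j"])
    fix a assume a: "a \<in> (SIGMA k:{0..m div j}. MS S (m - j*k))"
    obtain k p where kp: "a = (k,p)" by force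
    have k: "k \<le> m div j" and p: "set_mset p \<subseteq> S" "sum_mset p = m - j*k"
      using a kp by (auto simp: MS_def)
    have jp: "j \<notin># p" using p insert.hyps by auto
    have "j * k \<le> j * (m div j)" using k by simp
    also have "\<dots> \<le> m" by simp
    finally have jk: "j * k \<le> m" .
    have fp: "filter_mset (\<lambda>x. x \<noteq> j) p = p"
      using jp by (auto simp: multiset_eq_iff not_in_iff)
    show "(case a of (k, p) \<Rightarrow> p + replicate_mset k j) \<in> MS (insert j S) m"
      using kp p jk by (auto simp: MS_def)
    show "(count (case a of (k, p) \<Rightarrow> p + replicate_mset k j) j,
           filter_mset (\<lambda>x. x \<noteq> j) (case a of (k, p) \<Rightarrow> p + replicate_mset k j)) = a"
      using kp jp fp by (auto simp: count_eq_zero_iff)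
    have cnt: "\<And>i. i \<in> S \<Longrightarrow> count (p + replicate_mset k j) i = count p i"
      using insert.hyps by auto
    show "h j (count (case a of (k, p) \<Rightarrow> p + replicate_mset k j) j) *
          ?F (case a of (k, p) \<Rightarrow> p + replicate_mset k j) =
          (case a of (k, p) \<Rightarrow> h j k * ?F p)"
    proof -
      have c0: "count p j = 0" using jp by (simp add: not_in_iff)
      have "(\<Prod>i\<in>S. h i (count (p + replicate_mset k j) i)) = ?F p"
        by (rule prod.cong[OF refl]) (use insert.hyps(2) in auto)
      then show ?thesis using kp c0 by simp
    qed
  next
    fix b assume b: "b \<in> MS (insert j S) m"
    have sb: "set_mset b \<subseteq> insert j S" "sum_mset b = m" using b by (auto simp: MS_def)
    have e: "sum_mset b = sum_mset (filter_mset (\<lambda>x. x \<noteq> j) b) + count b j * j"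
      by (rule sum_split_mset)
    have le: "count b j * j \<le> m" using e sb by linarith
    then have "count b j \<le> m div j" using j by (simp add: less_eq_div_iff_mult_less_eq)
    moreover have "set_mset (filter_mset (\<lambda>x. x \<noteq> j) b) \<subseteq> S" using sb by auto
    moreover have "sum_mset (filter_mset (\<lambda>x. x \<noteq> j) b) = m - j * count b j"
      using e sb by (simp add: mult.commute)
    ultimately show "(count b j, filter_mset (\<lambda>x. x \<noteq> j) b) \<in> (SIGMA k:{0..m div j}. MS S (m - j*k))"
      by (auto simp: MS_def)
    show "(case (count b j, filter_mset (\<lambda>x. x \<noteq> j) b) of (k, p) \<Rightarrow> p + replicate_mset k j) = b"
      using split_mset[of b j] by simp
  qed
  also have "\<dots> = (\<Sum>p\<in>MS (insert j S) m. \<Prod>i\<in>insert j S. h i (count p i))"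
    using insert.hyps by simp
  finally show ?case .
qed



fun toM :: "nat list \<Rightarrow> nat list \<Rightarrow> nat multiset" where
  "toM (g#gs) (c#cs) = replicate_mset c g + image_mset (\<lambda>x. x + g) (toM gs cs)"
| "toM _ _ = {#}"

definition V :: "(nat list \<times> nat list) set" where
  "V = {(gs,cs). length gs = length cs \<and> (\<forall>x\<in>set gs. x > 0) \<and> (\<forall>x\<in>set cs. x > 0)}"

fun sz :: "nat list \<Rightarrow> nat list \<Rightarrow> nat" where
  "sz (g#gs) (c#cs) = g * (c + sum_list cs) + sz gs cs"
| "sz _ _ = 0"

fun e2 :: "nat list \<Rightarrow> nat" where
  "e2 [] = 0"
| "e2 (x#xs) = x * sum_list xs + e2 xs"

lemma size_count_sum: "size q = sum (count q) (set_mset q)"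
proof (induction q)
  case empty then show ?case by simp
next
  case (add x q)
  have "sum (count (add_mset x q)) (set_mset (add_mset x q)) =
        sum (\<lambda>y. count q y + (if y = x then 1 else 0)) (insert x (set_mset q))"
    by (rule sum.cong) auto
  also have "\<dots> = sum (count q) (insert x (set_mset q)) + 1"
    by (simp add: sum.distrib)
  also have "sum (count q) (insert x (set_mset q)) = sum (count q) (set_mset q)"
    by (cases "x \<in># q") (auto simp: sum.insert_if not_in_iff)
  finally show ?case using add by simp
qed

lemma count_shift1: "count (image_mset (\<lambda>x. x + (g::nat)) q) (y + g) = count q y"
  by (induction q) auto

lemma count_shift0: "y < (g::nat) \<Longrightarrow> count (image_mset (\<lambda>x. x + g) q) y = 0"
  by (induction q) auto

lemma count_shift: "count (image_mset (\<lambda>x. x + (g::nat)) q) y = (if g \<le> y then count q (y - g) else 0)"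
  using count_shift1[of g q "y - g"] count_shift0[of y g q] by auto

lemma sum_shift: "sum_mset (image_mset (\<lambda>x. x + (g::nat)) q) = sum_mset q + g * size q"
  by (induction q) auto

lemma size_toM: "length gs = length cs \<Longrightarrow> size (toM gs cs) = sum_list cs"
  by (induction gs cs rule: toM.induct) auto

lemma sum_toM: "length gs = length cs \<Longrightarrow> sum_mset (toM gs cs) = sz gs cs"
  by (induction gs cs rule: toM.induct) (simp_all add: sum_shift size_toM distrib_left)

lemma toM_ge: "x \<in># toM (g#gs) (c#cs) \<Longrightarrow> g \<le> x"
  by (auto split: if_splits)

lemma V_Cons: "(g#gs, c#cs) \<in> V \<longleftrightarrow> g > 0 \<and> c > 0 \<and> (gs,cs) \<in> V"
  by (auto simp: V_def)

lemma toM_pos: "(gs,cs) \<in> V \<Longrightarrow> x \<in># toM gs cs \<Longrightarrow> x > 0"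
proof (induction gs arbitrary: cs x)
  case Nil
  then show ?case by simp
next
  case (Cons g gs)
  show ?case
  proof (cases cs)
    case Nil
    then show ?thesis using Cons.prems by simp
  next
    case (Cons c cs1)
    have V: "g > 0" "(gs,cs1) \<in> V" using Cons.prems(1) Cons V_Cons by auto
    have "x \<in># replicate_mset c g \<or> x \<in># image_mset (\<lambda>x. x + g) (toM gs cs1)"
      using Cons.prems(2) Cons by simp
    then show ?thesis
    proof
      assume "x \<in># replicate_mset c g"
      then have "x = g" by (simp split: if_splits)
      then show ?thesis using V by simp
    next
      assume "x \<in># image_mset (\<lambda>x. x + g) (toM gs cs1)"
      then obtain y where "y \<in># toM gs cs1" "x = y + g" by auto
      then show ?thesis using V by simp
    qed
  qed
qed

lemma toM_empty: "(gs,cs) \<in> V \<Longrightarrow> toM gs cs = {#} \<Longrightarrow> gs = [] \<and> cs = []"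
proof (cases gs)
  case (Cons g gs2)
  assume V: "(gs,cs) \<in> V" and E: "toM gs cs = {#}"
  then obtain c cs2 where "cs = c # cs2" using Cons by (cases cs) (auto simp: V_def)
  then show ?thesis using V E Cons by (auto simp: V_def)
qed (auto simp: V_def)

lemma toM_inj:
  "(gs,cs) \<in> V \<Longrightarrow> (gs',cs') \<in> V \<Longrightarrow> toM gs cs = toM gs' cs' \<Longrightarrow> gs = gs' \<and> cs = cs'"
proof (induction gs arbitrary: cs gs' cs')
  case Nil
  then have "cs = []" by (simp add: V_def)
  then have "toM gs' cs' = {#}" using Nil.prems(3) by simp
  then have "gs' = [] \<and> cs' = []" using toM_empty Nil.prems(2) by blast
  then show ?case using \<open>cs = []\<close> by simp
next
  case (Cons g gs)
  obtain c cs1 where ec: "cs = c # cs1" using Cons.prems(1) by (cases cs) (auto simp: V_def)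
  have g0: "g > 0" "c > 0" using Cons.prems ec by (auto simp: V_def)
  have ne: "toM (g#gs) (c#cs1) \<noteq> {#}" using g0 by simp
  obtain g' gs2 c' cs2 where e: "gs' = g'#gs2" "cs' = c'#cs2"
  proof (cases gs')
    case Nil
    then have "cs' = []" using Cons.prems(2) by (simp add: V_def)
    then show ?thesis using Nil ne Cons.prems(3) ec by simp
  next
    case (Cons g' gs2)
    then obtain c' cs2 where "cs' = c'#cs2" using Cons.prems(2) by (cases cs') (auto simp: V_def)
    then show ?thesis using Cons that by blast
  qed
  have g0': "g' > 0" "c' > 0" using Cons.prems e by (auto simp: V_def)
  have eqM: "toM (g#gs) (c#cs1) = toM (g'#gs2) (c'#cs2)" using Cons.prems(3) e ec by simp
  have "g \<in># toM (g#gs) (c#cs1)" using g0 by simp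
  then have "g \<in># toM (g'#gs2) (c'#cs2)" by (simp only: eqM)
  then have "g' \<le> g" by (rule toM_ge)
  moreover have "g' \<in># toM (g'#gs2) (c'#cs2)" using g0' by simp
  then have "g' \<in># toM (g#gs) (c#cs1)" by (simp only: eqM)
  then have "g \<le> g'" by (rule toM_ge)
  ultimately have gg: "g = g'" by simp
  have V1: "(gs,cs1) \<in> V" "(gs2,cs2) \<in> V" using Cons.prems e ec by (auto simp: V_def)
  have "0 \<notin># toM gs cs1" using toM_pos[OF V1(1)] by blast
  then have z1: "count (toM gs cs1) 0 = 0" by (simp add: not_in_iff)
  have "0 \<notin># toM gs2 cs2" using toM_pos[OF V1(2)] by blast
  then have z2: "count (toM gs2 cs2) 0 = 0" by (simp add: not_in_iff)
  have A: "count (toM (g#gs) (c#cs1)) g = c" using z1 by (simp add: count_shift)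
  have B: "count (toM (g'#gs2) (c'#cs2)) g = c'" using gg z2 by (simp add: count_shift)
  from A have "count (toM (g'#gs2) (c'#cs2)) g = c" by (simp only: eqM)
  then have cc: "c = c'" using B by simp
  have "image_mset (\<lambda>x. x + g) (toM gs cs1) = image_mset (\<lambda>x. x + g) (toM gs2 cs2)"
    using eqM gg cc by simp
  then have "toM gs cs1 = toM gs2 cs2"
  proof -
    assume H: "image_mset (\<lambda>x. x + g) (toM gs cs1) = image_mset (\<lambda>x. x + g) (toM gs2 cs2)"
    show ?thesis
    proof (rule multiset_eqI)
      fix y
      have "count (image_mset (\<lambda>x. x + g) (toM gs cs1)) (y + g) = count (image_mset (\<lambda>x. x + g) (toM gs2 cs2)) (y + g)"
        using H by simp
      then show "count (toM gs cs1) y = count (toM gs2 cs2) y" by (simp only: count_shift1)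
    qed
  qed
  then have "gs = gs2 \<and> cs1 = cs2" using Cons.IH V1 by blast
  then show ?case using e ec gg cc by metis
qed


lemma toM_surj:
  assumes "\<forall>x\<in>#p. x > 0"
  shows "\<exists>gs cs. (gs,cs) \<in> V \<and> toM gs cs = p"
  using assms
proof (induction "size p" arbitrary: p rule: less_induct)
  case less
  show ?case
  proof (cases "p = {#}")
    case True
    then show ?thesis by (intro exI[of _ "[]"]) (simp add: V_def)
  next
    case False
    define g where "g = Min (set_mset p)"
    define c where "c = count p g"
    define q0 where "q0 = filter_mset (\<lambda>x. x \<noteq> g) p"
    define q where "q = image_mset (\<lambda>x. x - g) q0"
    have fin: "finite (set_mset p)" by simp
    have ne: "set_mset p \<noteq> {}" using False by simp
    have gp: "g \<in># p" unfolding g_def using Min_in[OF fin ne] by simp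
    have gmin: "\<And>x. x \<in># p \<Longrightarrow> g \<le> x" unfolding g_def using fin by simp
    have c0: "c > 0" using gp unfolding c_def by simp
    have g0: "g > 0" using gp less.prems by blast
    have q0gt: "\<And>x. x \<in># q0 \<Longrightarrow> g < x"
    proof -
      fix x assume "x \<in># q0"
      then have "x \<in># p" "x \<noteq> g" unfolding q0_def by auto
      then show "g < x" using gmin[of x] by simp
    qed
    have qpos: "\<forall>y\<in>#q. y > 0" unfolding q_def using q0gt by auto
    have psplit: "p = q0 + replicate_mset c g" unfolding q0_def c_def by (rule split_mset)
    have s1: "size q = size q0" unfolding q_def by simp
    have "size p = size q0 + c" using arg_cong[OF psplit, of size] by simp
    then have "size q < size p" using c0 s1 by simp
    then obtain gs cs where V: "(gs,cs) \<in> V" and t: "toM gs cs = q"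
      using less.hyps qpos by blast
    have "image_mset (\<lambda>x. x + g) q = image_mset ((\<lambda>x. x + g) \<circ> (\<lambda>x. x - g)) q0"
      unfolding q_def by (simp add: image_mset.compositionality)
    also have "\<dots> = image_mset id q0"
      by (rule image_mset_cong) (use q0gt in \<open>auto simp: less_imp_le\<close>)
    finally have "image_mset (\<lambda>x. x + g) q = q0" by simp
    then have "toM (g#gs) (c#cs) = p" using t psplit by (simp add: add.commute)
    moreover have "(g#gs, c#cs) \<in> V" using V g0 c0 by (simp add: V_Cons)
    ultimately show ?thesis by blast
  qed
qed

lemma bij_toM:
  "bij_betw (\<lambda>(gs,cs). toM gs cs) {(gs,cs) \<in> V. sz gs cs = m} (partitions m)"
  unfolding bij_betw_def
proof
  show "inj_on (\<lambda>(gs,cs). toM gs cs) {(gs,cs) \<in> V. sz gs cs = m}"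
  proof (rule inj_onI)
    fix x y assume "x \<in> {(gs,cs) \<in> V. sz gs cs = m}" "y \<in> {(gs,cs) \<in> V. sz gs cs = m}"
      "(\<lambda>(gs,cs). toM gs cs) x = (\<lambda>(gs,cs). toM gs cs) y"
    then show "x = y" using toM_inj by (cases x; cases y) auto
  qed
  show "(\<lambda>(gs,cs). toM gs cs) ` {(gs,cs) \<in> V. sz gs cs = m} = partitions m"
  proof
    show "(\<lambda>(gs,cs). toM gs cs) ` {(gs,cs) \<in> V. sz gs cs = m} \<subseteq> partitions m"
    proof
      fix p assume "p \<in> (\<lambda>(gs,cs). toM gs cs) ` {(gs,cs) \<in> V. sz gs cs = m}"
      then obtain gs cs where V: "(gs,cs) \<in> V" "sz gs cs = m" and t: "p = toM gs cs" by auto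
      have "\<forall>x\<in>#p. x > 0" using toM_pos[OF V(1)] t by blast
      moreover have "sum_mset p = m" using sum_toM[of gs cs] V t by (simp add: V_def)
      ultimately show "p \<in> partitions m" by (simp add: partitions_def)
    qed
    show "partitions m \<subseteq> (\<lambda>(gs,cs). toM gs cs) ` {(gs,cs) \<in> V. sz gs cs = m}"
    proof
      fix p assume p: "p \<in> partitions m"
      have "\<forall>x\<in>#p. x > 0" using p by (simp add: partitions_def)
      then obtain gs cs where V: "(gs,cs) \<in> V" and t: "toM gs cs = p"
        using toM_surj by blast
      have "sz gs cs = m" using sum_toM[of gs cs] V t p by (auto simp: V_def partitions_def)
      then show "p \<in> (\<lambda>(gs,cs). toM gs cs) ` {(gs,cs) \<in> V. sz gs cs = m}"
        using V t by force
    qed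
  qed
qed

lemma sz_snoc: "length gs = length cs \<Longrightarrow> sz (gs@[g]) (cs@[c]) = sz gs cs + (sum_list gs + g) * c"
  by (induction gs cs rule: sz.induct) (auto simp: algebra_simps)

lemma sz_rev: "length gs = length cs \<Longrightarrow> sz (rev cs) (rev gs) = sz gs cs"
proof (induction gs arbitrary: cs)
  case Nil then show ?case by simp
next
  case (Cons g gs)
  then obtain c cs1 where "cs = c # cs1" by (cases cs) auto
  then show ?case using Cons by (simp add: sz_snoc algebra_simps)
qed

lemma e2_snoc: "e2 (xs@[y]) = e2 xs + sum_list xs * y"
  by (induction xs) (auto simp: algebra_simps)

lemma e2_rev: "e2 (rev xs) = e2 xs"
  by (induction xs) (auto simp: e2_snoc algebra_simps)

lemma V_rev: "(gs,cs) \<in> V \<Longrightarrow> (rev cs, rev gs) \<in> V"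
  by (auto simp: V_def)

lemma sum_swap_e2:
  "(\<Sum>(gs,cs)\<in>{(gs,cs) \<in> V. sz gs cs = m}. e2 gs) = (\<Sum>(gs,cs)\<in>{(gs,cs) \<in> V. sz gs cs = m}. e2 cs)"
proof (rule sum.reindex_bij_witness[where i = "\<lambda>(gs,cs). (rev cs, rev gs)" and j = "\<lambda>(gs,cs). (rev cs, rev gs)"])
  fix a assume a: "a \<in> {(gs,cs) \<in> V. sz gs cs = m}"
  obtain gs cs where e: "a = (gs,cs)" by force
  have V: "(gs,cs) \<in> V" "sz gs cs = m" using a e by auto
  have l: "length gs = length cs" using V by (simp add: V_def)
  show "(case a of (gs, cs) \<Rightarrow> (rev cs, rev gs)) \<in> {(gs,cs) \<in> V. sz gs cs = m}"
    using V l e by (simp add: V_rev sz_rev)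
  show "(case (case a of (gs, cs) \<Rightarrow> (rev cs, rev gs)) of (gs, cs) \<Rightarrow> (rev cs, rev gs)) = a"
    using e by simp
  show "(case (case a of (gs, cs) \<Rightarrow> (rev cs, rev gs)) of (gs, cs) \<Rightarrow> e2 cs) = (case a of (gs, cs) \<Rightarrow> e2 gs)"
    using e by (simp add: e2_rev)
next
  fix a assume a: "a \<in> {(gs,cs) \<in> V. sz gs cs = m}"
  obtain gs cs where e: "a = (gs,cs)" by force
  have V: "(gs,cs) \<in> V" "sz gs cs = m" using a e by auto
  have l: "length gs = length cs" using V by (simp add: V_def)
  show "(case a of (gs, cs) \<Rightarrow> (rev cs, rev gs)) \<in> {(gs,cs) \<in> V. sz gs cs = m}"
    using V l e by (simp add: V_rev sz_rev)
  show "(case (case a of (gs, cs) \<Rightarrow> (rev cs, rev gs)) of (gs, cs) \<Rightarrow> (rev cs, rev gs)) = a"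
    using e by simp
qed


lemma mem_le_sum: "x \<in># p \<Longrightarrow> x \<le> sum_mset (p::nat multiset)"
  by (induction p) auto

definition Tset :: "nat multiset \<Rightarrow> nat set" where
  "Tset q = {t. 1 \<le> t \<and> (\<exists>x\<in>#q. t \<le> x)}"

definition Pr :: "nat multiset \<Rightarrow> (nat \<times> nat) set" where
  "Pr p = {(r,t). 1 \<le> r \<and> r < t \<and> (\<exists>x\<in>#p. r \<le> x \<and> x < t) \<and> (\<exists>x\<in>#p. t \<le> x)}"

definition Wp :: "nat multiset \<Rightarrow> nat" where
  "Wp p = card (Pr p)"

definition PS :: "nat multiset \<Rightarrow> (nat \<times> nat) set" where
  "PS p = {(b,a). b \<in># p \<and> a \<in># p \<and> b < a}"

definition WL :: "nat multiset \<Rightarrow> nat" where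
  "WL p = (\<Sum>(b,a)\<in>PS p. count p b * count p a)"

lemma finite_Tset: "finite (Tset q)"
proof (rule finite_subset)
  show "Tset q \<subseteq> {..sum_mset q}"
  proof
    fix t assume "t \<in> Tset q"
    then obtain x where "x \<in># q" "t \<le> x" unfolding Tset_def by auto
    then show "t \<in> {..sum_mset q}" using mem_le_sum[of x q] by simp
  qed
qed simp

lemma finite_Pr: "finite (Pr q)"
proof (rule finite_subset)
  show "Pr q \<subseteq> {..sum_mset q} \<times> {..sum_mset q}"
  proof
    fix z assume "z \<in> Pr q"
    then obtain r t x where "z = (r,t)" "r < t" "x \<in># q" "t \<le> x" unfolding Pr_def by auto
    then show "z \<in> {..sum_mset q} \<times> {..sum_mset q}" using mem_le_sum[of x q] by simp
  qed
qed simp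

lemma finite_PS: "finite (PS q)"
proof (rule finite_subset)
  show "PS q \<subseteq> set_mset q \<times> set_mset q" unfolding PS_def by auto
qed simp

context
  fixes c g :: nat and q :: "nat multiset"
  assumes c0: "c > 0" and qpos: "\<forall>x\<in>#q. x > 0"
begin

private abbreviation "P \<equiv> replicate_mset c g + image_mset (\<lambda>x. x + g) q"

private lemma memP: "x \<in># P \<longleftrightarrow> x = g \<or> (\<exists>y. y \<in># q \<and> x = y + g)"
  using c0 by auto

private lemma geP: "x \<in># P \<Longrightarrow> g \<le> x"
  using memP by auto

lemma Tset_step: "card (Tset P) = g + card (Tset q)"
proof -
  have e: "Tset P = {1..g} \<union> (\<lambda>t. t + g) ` Tset q"
  proof
    show "Tset P \<subseteq> {1..g} \<union> (\<lambda>t. t + g) ` Tset q"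
    proof
      fix t assume "t \<in> Tset P"
      then obtain x where t1: "1 \<le> t" and x: "x \<in># P" "t \<le> x" unfolding Tset_def by auto
      show "t \<in> {1..g} \<union> (\<lambda>t. t + g) ` Tset q"
      proof (cases "t \<le> g")
        case True then show ?thesis using t1 by auto
      next
        case False
        then obtain y where y: "y \<in># q" "x = y + g" using x memP by auto
        have "1 \<le> t - g" "t - g \<le> y" using y x False by auto
        then have "t - g \<in> Tset q" unfolding Tset_def using y(1) by auto
        moreover have "t = (t - g) + g" using False by simp
        ultimately show ?thesis by blast
      qed
    qed
    show "{1..g} \<union> (\<lambda>t. t + g) ` Tset q \<subseteq> Tset P"
    proof
      fix t assume t: "t \<in> {1..g} \<union> (\<lambda>t. t + g) ` Tset q"
      show "t \<in> Tset P"
      proof (cases "t \<in> {1..g}")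
        case True
        then show ?thesis unfolding Tset_def using memP[of g] by auto
      next
        case False
        then obtain s where s: "s \<in> Tset q" "t = s + g" using t by auto
        then obtain y where "y \<in># q" "s \<le> y" "1 \<le> s" unfolding Tset_def by auto
        then show ?thesis unfolding Tset_def using s memP[of "y + g"] by force
      qed
    qed
  qed
  have d: "{1..g} \<inter> (\<lambda>t. t + g) ` Tset q = {}" unfolding Tset_def by auto
  have "card (Tset P) = card {1..g} + card ((\<lambda>t. t + g) ` Tset q)"
    unfolding e by (rule card_Un_disjoint[OF _ _ d]) (simp_all add: finite_Tset)
  also have "card ((\<lambda>t. t + g) ` Tset q) = card (Tset q)"
    by (rule card_image) (auto simp: inj_on_def)
  finally show ?thesis by simp
qed

lemma Pr_step: "Wp P = g * card (Tset q) + Wp q"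
proof -
  let ?A = "{1..g} \<times> ((\<lambda>t. t + g) ` Tset q)"
  let ?B = "(\<lambda>(r,t). (r + g, t + g)) ` Pr q"
  have e: "Pr P = ?A \<union> ?B"
  proof
    show "Pr P \<subseteq> ?A \<union> ?B"
    proof
      fix z assume z: "z \<in> Pr P"
      obtain r t where rt: "z = (r,t)" by force
      obtain x x' where h: "1 \<le> r" "r < t" "x \<in># P" "r \<le> x" "x < t" "x' \<in># P" "t \<le> x'"
        using z rt unfolding Pr_def by auto
      have gx: "g \<le> x" using geP h by simp
      show "z \<in> ?A \<union> ?B"
      proof (cases "r \<le> g")
        case True
        have tg: "g < t" using gx h by simp
        then obtain y where y: "y \<in># q" "x' = y + g" using h memP[of x'] by auto
        have "1 \<le> t - g" "t - g \<le> y" using y h tg by auto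
        then have "t - g \<in> Tset q" unfolding Tset_def using y(1) by auto
        moreover have "t = (t - g) + g" using tg by simp
        ultimately have "t \<in> (\<lambda>t. t + g) ` Tset q" by blast
        then show ?thesis using rt True h by auto
      next
        case False
        obtain y where y: "y \<in># q" "x = y + g" using h memP[of x] False by auto
        obtain y' where y': "y' \<in># q" "x' = y' + g" using h memP[of x'] False by auto
        have A: "\<exists>x\<in>#q. r - g \<le> x \<and> x < t - g"
          using y h False by (intro bexI[of _ y]) auto
        have B: "\<exists>x\<in>#q. t - g \<le> x"
          using y' h False by (intro bexI[of _ y']) auto
        have "(r - g, t - g) \<in> Pr q" unfolding Pr_def using A B h False by auto
        moreover have "z = (\<lambda>(r,t). (r + g, t + g)) (r - g, t - g)" using rt False h by simp
        ultimately show ?thesis by blast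
      qed
    qed
    show "?A \<union> ?B \<subseteq> Pr P"
    proof
      fix z assume z: "z \<in> ?A \<union> ?B"
      show "z \<in> Pr P"
      proof (cases "z \<in> ?A")
        case True
        then obtain r s where rs: "z = (r, s + g)" "r \<in> {1..g}" "s \<in> Tset q" by auto
        then obtain y where "y \<in># q" "s \<le> y" "1 \<le> s" unfolding Tset_def by auto
        then show ?thesis unfolding Pr_def using rs memP[of g] memP[of "y + g"] by force
      next
        case False
        then obtain r t where rt: "z = (r + g, t + g)" "(r,t) \<in> Pr q" using z by auto
        then obtain x x' where h: "1 \<le> r" "r < t" "x \<in># q" "r \<le> x" "x < t" "x' \<in># q" "t \<le> x'"
          unfolding Pr_def by auto
        show ?thesis unfolding Pr_def using rt h memP[of "x + g"] memP[of "x' + g"] by force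
      qed
    qed
  qed
  have d: "?A \<inter> ?B = {}"
  proof -
    have "\<And>z. z \<in> ?B \<Longrightarrow> g < fst z" unfolding Pr_def by auto
    moreover have "\<And>z. z \<in> ?A \<Longrightarrow> fst z \<le> g" by auto
    ultimately show ?thesis by (meson disjoint_iff not_le)
  qed
  have "Wp P = card ?A + card ?B" unfolding Wp_def e
    by (rule card_Un_disjoint[OF _ _ d]) (simp_all add: finite_Tset finite_Pr)
  also have "card ?A = g * card (Tset q)"
  proof -
    have "card ((\<lambda>t. t + g) ` Tset q) = card (Tset q)"
      by (rule card_image) (auto simp: inj_on_def)
    then show ?thesis by (simp add: card_cartesian_product)
  qed
  also have "card ?B = Wp q" unfolding Wp_def
    by (rule card_image) (auto simp: inj_on_def)
  finally show ?thesis .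
qed

lemma WL_step: "WL P = c * size q + WL q"
proof -
  have cg: "count P g = c"
  proof -
    have "count q 0 = 0" using qpos by (metis not_in_iff less_irrefl)
    then show ?thesis by (simp add: count_shift)
  qed
  have cy: "\<And>y. y > 0 \<Longrightarrow> count P (y + g) = count q y"
    by (simp add: count_shift1)
  let ?A = "(\<lambda>y. (g, y + g)) ` set_mset q"
  let ?B = "(\<lambda>(x,y). (x + g, y + g)) ` PS q"
  have e: "PS P = ?A \<union> ?B"
  proof
    show "PS P \<subseteq> ?A \<union> ?B"
    proof
      fix z assume z: "z \<in> PS P"
      obtain b a where ba: "z = (b,a)" "b \<in># P" "a \<in># P" "b < a" using z unfolding PS_def by auto
      have "g \<le> b" using geP ba by simp
      then have "a \<noteq> g" using ba by simp
      then obtain y where y: "y \<in># q" "a = y + g" using ba memP[of a] by auto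
      show "z \<in> ?A \<union> ?B"
      proof (cases "b = g")
        case True then show ?thesis using ba y by auto
      next
        case False
        then obtain x where x: "x \<in># q" "b = x + g" using ba memP[of b] by auto
        have "(x,y) \<in> PS q" unfolding PS_def using x y ba by auto
        then show ?thesis using ba x y by force
      qed
    qed
    show "?A \<union> ?B \<subseteq> PS P"
    proof
      fix z assume z: "z \<in> ?A \<union> ?B"
      show "z \<in> PS P"
      proof (cases "z \<in> ?A")
        case True
        then obtain y where y: "y \<in># q" "z = (g, y + g)" by auto
        then show ?thesis unfolding PS_def using memP[of g] memP[of "y + g"] qpos by force
      next
        case False
        then obtain x y where xy: "(x,y) \<in> PS q" "z = (x + g, y + g)" using z by auto
        then show ?thesis unfolding PS_def using memP[of "x + g"] memP[of "y + g"] by force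
      qed
    qed
  qed
  have d: "?A \<inter> ?B = {}"
  proof -
    have "\<And>z. z \<in> ?B \<Longrightarrow> g < fst z" unfolding PS_def using qpos by auto
    moreover have "\<And>z. z \<in> ?A \<Longrightarrow> fst z \<le> g" by auto
    ultimately show ?thesis by (meson disjoint_iff not_le)
  qed
  have "WL P = (\<Sum>z\<in>?A. (\<lambda>(b,a). count P b * count P a) z) + (\<Sum>z\<in>?B. (\<lambda>(b,a). count P b * count P a) z)"
    unfolding WL_def e by (rule sum.union_disjoint[OF _ _ d]) (simp_all add: finite_PS)
  also have "(\<Sum>z\<in>?A. (\<lambda>(b,a). count P b * count P a) z) = (\<Sum>y\<in>set_mset q. (\<lambda>(b,a). count P b * count P a) (g, y + g))"
    by (subst sum.reindex) (auto simp: inj_on_def)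
  also have "\<dots> = (\<Sum>y\<in>set_mset q. c * count q y)"
  proof (rule sum.cong[OF refl])
    fix y assume "y \<in> set_mset q"
    then have "y > 0" using qpos by auto
    then show "(\<lambda>(b,a). count P b * count P a) (g, y + g) = c * count q y"
      by (simp only: prod.case cg cy)
  qed
  also have "\<dots> = c * size q" by (simp add: size_count_sum sum_distrib_left)
  also have "(\<Sum>z\<in>?B. (\<lambda>(b,a). count P b * count P a) z) = (\<Sum>z\<in>PS q. (\<lambda>(b,a). count P b * count P a) ((\<lambda>(x,y). (x + g, y + g)) z))"
    by (subst sum.reindex) (auto simp: inj_on_def)
  also have "\<dots> = WL q"
    unfolding WL_def
  proof (rule sum.cong[OF refl])
    fix z assume z: "z \<in> PS q"
    obtain x y where xy: "z = (x,y)" by force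
    have "x > 0" "y > 0" using z xy qpos unfolding PS_def by auto
    then show "(\<lambda>(b,a). count P b * count P a) ((\<lambda>(x,y). (x + g, y + g)) z) = (\<lambda>(b,a). count q b * count q a) z"
      unfolding xy by (simp only: prod.case cy)
  qed
  finally show ?thesis .
qed

end

lemma toM_weights:
  "(gs,cs) \<in> V \<Longrightarrow> card (Tset (toM gs cs)) = sum_list gs \<and> Wp (toM gs cs) = e2 gs \<and> WL (toM gs cs) = e2 cs"
proof (induction gs arbitrary: cs)
  case Nil
  then have "cs = []" by (simp add: V_def)
  then show ?case by (simp add: Tset_def Wp_def Pr_def WL_def PS_def)
next
  case (Cons g gs)
  obtain c cs1 where ec: "cs = c # cs1" using Cons.prems by (cases cs) (auto simp: V_def)
  have V: "c > 0" "(gs,cs1) \<in> V" using Cons.prems ec by (auto simp: V_Cons)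
  have l: "length gs = length cs1" using V by (simp add: V_def)
  have qpos: "\<forall>x\<in>#toM gs cs1. x > 0" using toM_pos[OF V(2)] by blast
  have IH: "card (Tset (toM gs cs1)) = sum_list gs" "Wp (toM gs cs1) = e2 gs" "WL (toM gs cs1) = e2 cs1"
    using Cons.IH[OF V(2)] by auto
  have t: "toM (g#gs) cs = replicate_mset c g + image_mset (\<lambda>x. x + g) (toM gs cs1)" using ec by simp
  show ?case unfolding t
    using Tset_step[OF V(1) qpos] Pr_step[OF V(1) qpos] WL_step[OF V(1) qpos] IH size_toM[OF l]
    by (simp add: ec)
qed

theorem conj_sum: "(\<Sum>p\<in>partitions m. WL p) = (\<Sum>p\<in>partitions m. Wp p)"
proof -
  have "(\<Sum>p\<in>partitions m. WL p) = (\<Sum>x\<in>{(gs,cs) \<in> V. sz gs cs = m}. WL ((\<lambda>(gs,cs). toM gs cs) x))"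
    by (rule sum.reindex_bij_betw[OF bij_toM, symmetric])
  also have "\<dots> = (\<Sum>(gs,cs)\<in>{(gs,cs) \<in> V. sz gs cs = m}. e2 cs)"
    by (rule sum.cong) (auto simp: toM_weights)
  also have "\<dots> = (\<Sum>(gs,cs)\<in>{(gs,cs) \<in> V. sz gs cs = m}. e2 gs)"
    by (rule sum_swap_e2[symmetric])
  also have "\<dots> = (\<Sum>x\<in>{(gs,cs) \<in> V. sz gs cs = m}. Wp ((\<lambda>(gs,cs). toM gs cs) x))"
    by (rule sum.cong) (auto simp: toM_weights)
  also have "\<dots> = (\<Sum>p\<in>partitions m. Wp p)"
    by (rule sum.reindex_bij_betw[OF bij_toM])
  finally show ?thesis .
qed



definition zf :: "nat \<Rightarrow> int" where "zf k = (if k = 0 then 1 else 0)"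
definition onef :: "nat \<Rightarrow> int" where "onef k = 1"
definition ef :: "nat \<Rightarrow> int" where "ef k = (if k = 0 then 1 else 0) - (if k = 1 then 1 else 0)"
definition posf :: "nat \<Rightarrow> int" where "posf k = (if k \<ge> 1 then 1 else 0)"
definition idf :: "nat \<Rightarrow> int" where "idf k = int k"

lemma conv_rev: "conv h1 h2 k = (\<Sum>i=0..k. h1 (k - i) * h2 i)"
  unfolding conv_def by (subst sum.atLeastAtMost_rev) simp

lemma conv_one_z: "conv onef zf = onef"
proof
  fix k show "conv onef zf k = onef k"
    unfolding conv_rev by (simp add: onef_def zf_def)
qed

lemma conv_one_e: "conv onef ef = zf"
proof
  fix k
  have "conv onef ef k = (\<Sum>i=0..k. (if i = 0 then 1 else 0)) - (\<Sum>i=0..k. (if i = 1 then 1 else 0) :: int)"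
    unfolding conv_rev by (simp add: onef_def ef_def sum_subtractf)
  also have "\<dots> = 1 - (if 1 \<le> k then 1 else 0)"
    by (simp only: sum.delta finite_atLeastAtMost) simp
  finally show "conv onef ef k = zf k" by (simp add: zf_def)
qed

lemma conv_one_pos: "conv onef posf = idf"
proof
  fix k
  have "conv onef posf k = (\<Sum>i=0..k. (if 1 \<le> i then 1 else 0))"
    unfolding conv_rev by (simp add: onef_def posf_def)
  also have "\<dots> = (\<Sum>i\<in>{i\<in>{0..k}. 1 \<le> i}. 1)"
    by (rule sum.inter_filter[symmetric]) simp
  also have "\<dots> = int k"
  proof -
    have "{i\<in>{0..k}. 1 \<le> i} = {1..k}" by auto
    then show ?thesis by simp
  qed
  finally show "conv onef posf k = idf k" by (simp add: idf_def)
qed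

lemma ser_zf: "j > 0 \<Longrightarrow> ser j zf = 1"
proof (rule fps_ext)
  fix n assume j: "j > 0"
  have "(j dvd n \<and> n div j = 0) \<longleftrightarrow> n = 0" using j by auto
  then show "fps_nth (ser j zf) n = fps_nth 1 n"
    by (auto simp: ser_nth zf_def)
qed

definition Pser :: "nat \<Rightarrow> (nat \<Rightarrow> nat \<Rightarrow> int) \<Rightarrow> int fps" where
  "Pser N h = (\<Prod>j\<in>{1..N}. ser j (h j))"

lemma Pser_nth: "fps_nth (Pser N h) m = (\<Sum>p\<in>MS {1..N} m. \<Prod>j\<in>{1..N}. h j (count p j))"
  unfolding Pser_def by (rule prod_ser) auto

lemma Pser_mult: "Pser N h1 * Pser N h2 = Pser N (\<lambda>j. conv (h1 j) (h2 j))"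
  unfolding Pser_def prod.distrib[symmetric]
  by (rule prod.cong[OF refl]) (simp add: ser_mult)

lemma Pser_zf: "Pser N (\<lambda>j. zf) = 1"
  unfolding Pser_def by (rule prod.neutral) (simp add: ser_zf)

lemma prod_bool:
  assumes "finite A"
  shows "(\<Prod>j\<in>A. (if P j then 1 else 0) :: int) = (if \<forall>j\<in>A. P j then 1 else 0)"
  using assms by (induction A rule: finite_induct) auto

lemma MS_partitions:
  assumes "m \<le> N"
  shows "MS {1..N} m = partitions m"
proof
  show "MS {1..N} m \<subseteq> partitions m"
    by (auto simp: MS_def partitions_def)
  show "partitions m \<subseteq> MS {1..N} m"
  proof
    fix p assume p: "p \<in> partitions m"
    have "\<And>x. x \<in># p \<Longrightarrow> x \<in> {1..N}"
    proof -
      fix x assume x: "x \<in># p"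
      then have "x \<le> m" using p mem_le_sum[of x p] by (simp add: partitions_def)
      moreover have "x > 0" using x p by (simp add: partitions_def)
      ultimately show "x \<in> {1..N}" using assms by simp
    qed
    then show "p \<in> MS {1..N} m" using p by (auto simp: MS_def partitions_def)
  qed
qed


definition PairsN :: "nat \<Rightarrow> (nat \<times> nat) set" where
  "PairsN N = {(b,a). 1 \<le> b \<and> b < a \<and> a \<le> N}"

lemma finite_PairsN: "finite (PairsN N)"
  by (rule finite_subset[of _ "{..N} \<times> {..N}"]) (auto simp: PairsN_def)

definition hL :: "nat \<Rightarrow> nat \<Rightarrow> nat \<Rightarrow> nat \<Rightarrow> int" where
  "hL b a j = (if j = b \<or> j = a then posf else zf)"

definition hE :: "nat set \<Rightarrow> nat \<Rightarrow> nat \<Rightarrow> int" where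
  "hE S j = (if j \<in> S then ef else zf)"

definition Lser :: "nat \<Rightarrow> int fps" where
  "Lser N = (\<Sum>(b,a)\<in>PairsN N. Pser N (hL b a))"

definition Rser :: "nat \<Rightarrow> int fps" where
  "Rser N = (\<Sum>(r,t)\<in>PairsN N. Pser N (hE {r..N}) - Pser N (hE {r..<t}) - Pser N (hE {t..N}) + Pser N (hE {}))"

definition Qs :: "nat \<Rightarrow> int fps" where
  "Qs N = Pser N (\<lambda>j. onef)"

lemma QL: "Qs N * Pser N (hL b a) = Pser N (\<lambda>j. if j = b \<or> j = a then idf else onef)"
  unfolding Qs_def Pser_mult
  by (rule arg_cong[where f = "Pser N"]) (auto simp: hL_def conv_one_pos conv_one_z)

lemma QE: "Qs N * Pser N (hE S) = Pser N (\<lambda>j. if j \<in> S then zf else onef)"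
  unfolding Qs_def Pser_mult
  by (rule arg_cong[where f = "Pser N"]) (auto simp: hE_def conv_one_e conv_one_z)

lemma cL:
  assumes "b \<noteq> a"
  shows "fps_nth (Pser N (\<lambda>j. if j = b \<or> j = a then idf else onef)) m =
    (\<Sum>p\<in>MS {1..N} m. (if b \<in> {1..N} then int (count p b) else 1) * (if a \<in> {1..N} then int (count p a) else 1))"
  unfolding Pser_nth
proof (rule sum.cong[OF refl])
  fix p
  have "(\<Prod>j\<in>{1..N}. (if j = b \<or> j = a then idf else onef) (count p j)) =
        (\<Prod>j\<in>{1..N}. (if j = b then int (count p j) else 1) * (if j = a then int (count p j) else 1))"
    using assms by (intro prod.cong) (auto simp: idf_def onef_def)
  also have "\<dots> = (if b \<in> {1..N} then int (count p b) else 1) * (if a \<in> {1..N} then int (count p a) else 1)"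
    by (simp only: prod.distrib prod.delta finite_atLeastAtMost)
  finally show "(\<Prod>j\<in>{1..N}. (if j = b \<or> j = a then idf else onef) (count p j)) =
    (if b \<in> {1..N} then int (count p b) else 1) * (if a \<in> {1..N} then int (count p a) else 1)" .
qed

lemma cE:
  "fps_nth (Pser N (\<lambda>j. if j \<in> S then zf else onef)) m =
    (\<Sum>p\<in>MS {1..N} m. (if \<forall>j\<in>{1..N}. j \<in> S \<longrightarrow> count p j = 0 then 1 else 0))"
  unfolding Pser_nth
proof (rule sum.cong[OF refl])
  fix p
  have "(\<Prod>j\<in>{1..N}. (if j \<in> S then zf else onef) (count p j)) =
        (\<Prod>j\<in>{1..N}. (if j \<in> S \<longrightarrow> count p j = 0 then 1 else 0))"
    by (intro prod.cong refl) (simp add: zf_def onef_def count_eq_zero_iff)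
  also have "\<dots> = (if \<forall>j\<in>{1..N}. j \<in> S \<longrightarrow> count p j = 0 then 1 else 0)"
    by (rule prod_bool) simp
  finally show "(\<Prod>j\<in>{1..N}. (if j \<in> S then zf else onef) (count p j)) =
    (if \<forall>j\<in>{1..N}. j \<in> S \<longrightarrow> count p j = 0 then 1 else 0)" .
qed

lemma none_iff:
  assumes "set_mset p \<subseteq> {1..N}"
  shows "(\<forall>j\<in>{1..N}. j \<in> S \<longrightarrow> count p j = 0) \<longleftrightarrow> (\<forall>x\<in>#p. x \<notin> S)"
  using assms by (auto simp: count_eq_zero_iff)

lemma QL_sum:
  assumes "m \<le> N"
  shows "fps_nth (Qs N * Lser N) m = (\<Sum>p\<in>partitions m. int (WL p))"
proof -
  have "fps_nth (Qs N * Lser N) m = (\<Sum>(b,a)\<in>PairsN N. fps_nth (Qs N * Pser N (hL b a)) m)"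
    unfolding Lser_def sum_distrib_left fps_sum_nth by (simp add: case_prod_unfold)
  also have "\<dots> = (\<Sum>(b,a)\<in>PairsN N. \<Sum>p\<in>MS {1..N} m. int (count p b) * int (count p a))"
    by (rule sum.cong[OF refl]) (auto simp: QL cL PairsN_def)
  also have "\<dots> = (\<Sum>p\<in>MS {1..N} m. \<Sum>(b,a)\<in>PairsN N. int (count p b) * int (count p a))"
    by (subst sum.swap) (simp add: case_prod_unfold)
  also have "\<dots> = (\<Sum>p\<in>partitions m. int (WL p))"
    unfolding MS_partitions[OF assms]
  proof (rule sum.cong[OF refl])
    fix p assume p: "p \<in> partitions m"
    have sub: "set_mset p \<subseteq> {1..N}" using p MS_partitions[OF assms] by (auto simp: MS_def)
    have "int (WL p) = (\<Sum>(b,a)\<in>PS p. int (count p b) * int (count p a))"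
      by (simp add: WL_def of_nat_sum case_prod_unfold)
    also have "\<dots> = (\<Sum>(b,a)\<in>PairsN N. int (count p b) * int (count p a))"
    proof (rule sum.mono_neutral_left)
      show "finite (PairsN N)" by (rule finite_PairsN)
      show "PS p \<subseteq> PairsN N" using sub by (auto simp: PS_def PairsN_def)
      show "\<forall>i\<in>PairsN N - PS p. (case i of (b, a) \<Rightarrow> int (count p b) * int (count p a)) = 0"
        by (auto simp: PS_def PairsN_def count_eq_zero_iff)
    qed
    finally show "(\<Sum>(b,a)\<in>PairsN N. int (count p b) * int (count p a)) = int (WL p)" by simp
  qed
  finally show ?thesis .
qed


lemma QR_point:
  assumes sub: "set_mset p \<subseteq> {1..N}" and rt: "(r,t) \<in> PairsN N"
  shows "(if \<forall>j\<in>{1..N}. j \<in> {r..N} \<longrightarrow> count p j = 0 then 1 else 0)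
       - (if \<forall>j\<in>{1..N}. j \<in> {r..<t} \<longrightarrow> count p j = 0 then 1 else 0)
       - (if \<forall>j\<in>{1..N}. j \<in> {t..N} \<longrightarrow> count p j = 0 then 1 else 0)
       + (if \<forall>j\<in>{1..N}. j \<in> {} \<longrightarrow> count p j = 0 then 1 else 0)
     = (if (r,t) \<in> Pr p then 1 else (0::int))"
proof -
  have le: "\<And>x. x \<in># p \<Longrightarrow> x \<le> N" using sub by auto
  have r: "1 \<le> r" "r < t" "t \<le> N" using rt by (auto simp: PairsN_def)
  define B where "B = (\<exists>x\<in>#p. r \<le> x \<and> x < t)"
  define C where "C = (\<exists>x\<in>#p. t \<le> x)"
  have e1: "(\<forall>x\<in>#p. x \<notin> {r..N}) \<longleftrightarrow> \<not> B \<and> \<not> C"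
    unfolding B_def C_def using le r by (auto simp: not_le)
  have e2: "(\<forall>x\<in>#p. x \<notin> {r..<t}) \<longleftrightarrow> \<not> B" unfolding B_def by auto
  have e3: "(\<forall>x\<in>#p. x \<notin> {t..N}) \<longleftrightarrow> \<not> C" unfolding C_def using le by auto
  have e4: "(r,t) \<in> Pr p \<longleftrightarrow> B \<and> C" unfolding Pr_def B_def C_def using r by auto
  show ?thesis
    unfolding none_iff[OF sub] e1 e2 e3 e4 by auto
qed

lemma cQE: "fps_nth (Qs N * Pser N (hE S)) m =
    (\<Sum>p\<in>MS {1..N} m. (if \<forall>j\<in>{1..N}. j \<in> S \<longrightarrow> count p j = 0 then 1 else 0))"
  by (simp only: QE cE)

lemma QR_sum:
  assumes "m \<le> N"
  shows "fps_nth (Qs N * Rser N) m = (\<Sum>p\<in>partitions m. int (Wp p))"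
proof -
  let ?I = "\<lambda>S p. (if \<forall>j\<in>{1..N}. j \<in> S \<longrightarrow> count p j = 0 then 1 else (0::int))"
  have "fps_nth (Qs N * Rser N) m = (\<Sum>(r,t)\<in>PairsN N. fps_nth (Qs N * Pser N (hE {r..N})) m
      - fps_nth (Qs N * Pser N (hE {r..<t})) m - fps_nth (Qs N * Pser N (hE {t..N})) m
      + fps_nth (Qs N * Pser N (hE {})) m)"
    unfolding Rser_def sum_distrib_left fps_sum_nth
    by (rule sum.cong[OF refl]) (simp only: case_prod_unfold distrib_left right_diff_distrib fps_add_nth fps_sub_nth)
  also have "\<dots> = (\<Sum>(r,t)\<in>PairsN N. \<Sum>p\<in>MS {1..N} m. ?I {r..N} p - ?I {r..<t} p - ?I {t..N} p + ?I {} p)"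
    by (rule sum.cong[OF refl]) (simp only: case_prod_unfold cQE sum_subtractf[symmetric] sum.distrib[symmetric])
  also have "\<dots> = (\<Sum>p\<in>MS {1..N} m. \<Sum>(r,t)\<in>PairsN N. ?I {r..N} p - ?I {r..<t} p - ?I {t..N} p + ?I {} p)"
    by (subst sum.swap) (simp add: case_prod_unfold)
  also have "\<dots> = (\<Sum>p\<in>partitions m. int (Wp p))"
    unfolding MS_partitions[OF assms]
  proof (rule sum.cong[OF refl])
    fix p assume p: "p \<in> partitions m"
    have sub: "set_mset p \<subseteq> {1..N}" using p MS_partitions[OF assms] by (auto simp: MS_def)
    have "(\<Sum>(r,t)\<in>PairsN N. ?I {r..N} p - ?I {r..<t} p - ?I {t..N} p + ?I {} p)
        = (\<Sum>z\<in>PairsN N. if z \<in> Pr p then 1 else 0)"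
    proof (rule sum.cong[OF refl])
      fix z assume z: "z \<in> PairsN N"
      obtain r t where zz: "z = (r,t)" by force
      show "(case z of (r,t) \<Rightarrow> ?I {r..N} p - ?I {r..<t} p - ?I {t..N} p + ?I {} p) = (if z \<in> Pr p then 1 else 0)"
        using QR_point[OF sub, of r t] z zz by simp
    qed
    also have "\<dots> = int (card (PairsN N \<inter> Pr p))"
      by (simp add: sum.If_cases finite_PairsN)
    also have "PairsN N \<inter> Pr p = Pr p"
    proof -
      have "Pr p \<subseteq> PairsN N"
      proof
        fix z assume "z \<in> Pr p"
        then obtain r t x where "z = (r,t)" "1 \<le> r" "r < t" "x \<in># p" "t \<le> x" unfolding Pr_def by auto
        then show "z \<in> PairsN N" using sub by (auto simp: PairsN_def)
      qed
      then show ?thesis by blast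
    qed
    finally show "(\<Sum>(r,t)\<in>PairsN N. ?I {r..N} p - ?I {r..<t} p - ?I {t..N} p + ?I {} p) = int (Wp p)"
      by (simp add: Wp_def)
  qed
  finally show ?thesis .
qed

lemma coeff_eq:
  assumes "n \<le> N"
  shows "fps_nth (Lser N) n = fps_nth (Rser N) n"
proof -
  define D where "D = Lser N - Rser N"
  define E where "E = Pser N (\<lambda>j. ef)"
  have QD: "\<And>m. m \<le> N \<Longrightarrow> fps_nth (Qs N * D) m = 0"
  proof -
    fix m assume m: "m \<le> N"
    have "fps_nth (Qs N * D) m = fps_nth (Qs N * Lser N) m - fps_nth (Qs N * Rser N) m"
      by (simp add: D_def algebra_simps)
    also have "\<dots> = int (\<Sum>p\<in>partitions m. WL p) - int (\<Sum>p\<in>partitions m. Wp p)"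
      using QL_sum[OF m] QR_sum[OF m] by simp
    also have "\<dots> = 0" by (simp add: conj_sum)
    finally show "fps_nth (Qs N * D) m = 0" .
  qed
  have QE1: "Qs N * E = 1"
    unfolding Qs_def E_def Pser_mult conv_one_e by (rule Pser_zf)
  have "E * (Qs N * D) = (E * Qs N) * D" by (rule mult.assoc[symmetric])
  also have "\<dots> = (Qs N * E) * D" by (simp only: mult.commute[of E "Qs N"])
  also have "\<dots> = D" by (simp only: QE1 mult_1_left)
  finally have eq: "E * (Qs N * D) = D" .
  have "fps_nth D n = fps_nth (E * (Qs N * D)) n" by (simp only: eq)
  also have "\<dots> = (\<Sum>i=0..n. fps_nth E i * fps_nth (Qs N * D) (n - i))"
    by (rule fps_mult_nth)
  also have "\<dots> = 0"
    by (rule sum.neutral) (use QD assms in auto)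
  finally show ?thesis by (simp add: D_def)
qed



lemma valE:
  assumes sub: "set_mset p \<subseteq> {1..N}"
  shows "(\<Prod>j\<in>{1..N}. hE S j (count p j)) =
    (if (\<forall>x. count p x \<le> 1) \<and> set_mset p \<subseteq> S then (-1) ^ size p else 0)"
proof (cases "(\<forall>x. count p x \<le> 1) \<and> set_mset p \<subseteq> S")
  case True
  have "(\<Prod>j\<in>{1..N}. hE S j (count p j)) = (\<Prod>j\<in>{1..N}. (-1::int) ^ count p j)"
  proof (rule prod.cong[OF refl])
    fix j assume j: "j \<in> {1..N}"
    have c: "count p j \<le> 1" using True by blast
    show "hE S j (count p j) = (-1) ^ count p j"
    proof (cases "count p j = 0")
      case True then show ?thesis by (simp add: hE_def ef_def zf_def)
    next
      case False
      then have "count p j = 1" using c by arith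
      moreover have "j \<in> S" using False \<open>(\<forall>x. count p x \<le> 1) \<and> set_mset p \<subseteq> S\<close>
        by (auto simp: count_eq_zero_iff)
      ultimately show ?thesis by (simp add: hE_def ef_def)
    qed
  qed
  also have "\<dots> = (-1) ^ (\<Sum>j\<in>{1..N}. count p j)" by (simp add: power_sum)
  also have "(\<Sum>j\<in>{1..N}. count p j) = size p"
  proof -
    have "(\<Sum>j\<in>{1..N}. count p j) = sum (count p) (set_mset p)"
      by (rule sum.mono_neutral_right) (use sub in \<open>auto simp: count_eq_zero_iff\<close>)
    then show ?thesis by (simp add: size_count_sum)
  qed
  finally show ?thesis using True by simp
next
  case False
  then obtain j where j: "count p j \<ge> 2 \<or> (j \<in># p \<and> j \<notin> S)"
    by (metis One_nat_def not_less_eq_eq numeral_2_eq_2 subsetI)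
  have "j \<in># p"
  proof (cases "count p j \<ge> 2")
    case True
    then have "0 < count p j" by linarith
    then show ?thesis by simp
  next
    case False
    then show ?thesis using j by auto
  qed
  then have jI: "j \<in> {1..N}" using sub by auto
  have "hE S j (count p j) = 0" using j \<open>j \<in># p\<close>
    by (auto simp: hE_def ef_def zf_def count_eq_zero_iff)
  then have P0: "(\<Prod>j\<in>{1..N}. hE S j (count p j)) = 0"
    using jI by (intro prod_zero) auto
  show ?thesis by (subst if_not_P[OF False]) (rule P0)
qed


lemma sum_ind_card:
  assumes "finite A"
  shows "(\<Sum>x\<in>A. if P x then 1 else 0) = int (card {x\<in>A. P x})"
proof -
  have "(\<Sum>x\<in>A. if P x then 1 else (0::int)) = (\<Sum>x\<in>{x\<in>A. P x}. 1)"
    by (rule sum.inter_filter[symmetric]) (rule assms)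
  then show ?thesis by simp
qed

lemma finite_partitions: "finite (partitions n)"
  using finite_MS[of "{1..n}" n] MS_partitions[of n n] by simp

lemma Rpoint:
  assumes sub: "set_mset p \<subseteq> {1..N}" and ne: "p \<noteq> {#}" and rt: "(r,t) \<in> PairsN N"
  shows "(\<Prod>j\<in>{1..N}. hE {r..N} j (count p j)) - (\<Prod>j\<in>{1..N}. hE {r..<t} j (count p j))
       - (\<Prod>j\<in>{1..N}. hE {t..N} j (count p j)) + (\<Prod>j\<in>{1..N}. hE {} j (count p j))
     = (if \<forall>x. count p x \<le> 1 then (-1) ^ size p *
          (if r \<le> Min (set_mset p) \<and> Min (set_mset p) < t \<and> t \<le> Max (set_mset p) then 1 else 0) else 0)"
proof -
  let ?A = "set_mset p"
  have fin: "finite ?A" and ne': "?A \<noteq> {}" using ne by auto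
  have r: "1 \<le> r" "r < t" "t \<le> N" using rt by (auto simp: PairsN_def)
  define s where "s = Min ?A"
  define l where "l = Max ?A"
  define D where "D = (\<forall>x. count p x \<le> 1)"
  define sg where "sg = ((-1::int) ^ size p)"
  have i1: "?A \<subseteq> {r..N} \<longleftrightarrow> r \<le> s"
    using sub unfolding s_def by (auto simp: Min_ge_iff[OF fin ne'])
  have i2: "?A \<subseteq> {r..<t} \<longleftrightarrow> r \<le> s \<and> l < t"
    unfolding s_def l_def by (auto simp: Min_ge_iff[OF fin ne'] Max_less_iff[OF fin ne'])
  have i3: "?A \<subseteq> {t..N} \<longleftrightarrow> t \<le> s"
    using sub unfolding s_def by (auto simp: Min_ge_iff[OF fin ne'])
  have i4: "(?A \<subseteq> {}) = False" using ne' by simp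
  have mm: "s \<le> l" unfolding s_def l_def using fin ne' by simp
  show ?thesis
    unfolding valE[OF sub] i1 i2 i3 i4 D_def[symmetric] sg_def[symmetric] s_def[symmetric] l_def[symmetric]
    using mm r by auto
qed

lemma card_rt:
  assumes "1 \<le> s" "s \<le> l" "l \<le> N"
  shows "card {z\<in>PairsN N. fst z \<le> s \<and> s < snd z \<and> snd z \<le> l} = s * (l - s)"
proof -
  have "{z\<in>PairsN N. fst z \<le> s \<and> s < snd z \<and> snd z \<le> l} = {1..s} \<times> {Suc s..l}"
    using assms by (auto simp: PairsN_def)
  then show ?thesis by (simp add: card_cartesian_product)
qed

lemma Rser_val:
  assumes n: "n > 0"
  shows "fps_nth (Rser n) n = (\<Sum>p\<in>distinct_partitions n. (-1) ^ num_parts p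
        * int (smallest_part p) * (int (largest_part p) - int (smallest_part p)))"
proof -
  let ?V = "\<lambda>S p. \<Prod>j\<in>{1..n}. hE S j (count p j)"
  let ?F = "\<lambda>p r t. (if \<forall>x. count p x \<le> 1 then (-1) ^ size p *
          (if r \<le> Min (set_mset p) \<and> Min (set_mset p) < t \<and> t \<le> Max (set_mset p) then 1 else 0) else (0::int))"
  have MSn: "MS {1..n} n = partitions n" by (rule MS_partitions) simp
  have pp: "\<And>p. p \<in> partitions n \<Longrightarrow> set_mset p \<subseteq> {1..n} \<and> p \<noteq> {#}"
    using MSn n by (auto simp: MS_def partitions_def)
  have "fps_nth (Rser n) n = (\<Sum>(r,t)\<in>PairsN n. fps_nth (Pser n (hE {r..n})) n
      - fps_nth (Pser n (hE {r..<t})) n - fps_nth (Pser n (hE {t..n})) n + fps_nth (Pser n (hE {})) n)"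
    unfolding Rser_def fps_sum_nth
    by (rule sum.cong[OF refl]) (simp only: case_prod_unfold fps_add_nth fps_sub_nth)
  also have "\<dots> = (\<Sum>(r,t)\<in>PairsN n. \<Sum>p\<in>partitions n. ?V {r..n} p - ?V {r..<t} p - ?V {t..n} p + ?V {} p)"
    by (rule sum.cong[OF refl]) (simp only: case_prod_unfold Pser_nth MSn sum_subtractf[symmetric] sum.distrib[symmetric])
  also have "\<dots> = (\<Sum>(r,t)\<in>PairsN n. \<Sum>p\<in>partitions n. ?F p r t)"
  proof (rule sum.cong[OF refl])
    fix z assume z: "z \<in> PairsN n"
    obtain r t where zz: "z = (r,t)" by force
    have "(\<Sum>p\<in>partitions n. ?V {r..n} p - ?V {r..<t} p - ?V {t..n} p + ?V {} p) = (\<Sum>p\<in>partitions n. ?F p r t)"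
      by (rule sum.cong[OF refl]) (use pp Rpoint z zz in blast)
    then show "(case z of (r,t) \<Rightarrow> \<Sum>p\<in>partitions n. ?V {r..n} p - ?V {r..<t} p - ?V {t..n} p + ?V {} p)
      = (case z of (r,t) \<Rightarrow> \<Sum>p\<in>partitions n. ?F p r t)" using zz by simp
  qed
  also have "\<dots> = (\<Sum>p\<in>partitions n. \<Sum>(r,t)\<in>PairsN n. ?F p r t)"
    by (subst sum.swap) (simp add: case_prod_unfold)
  also have "\<dots> = (\<Sum>p\<in>partitions n. if \<forall>x. count p x \<le> 1 then (-1) ^ num_parts p
        * int (smallest_part p) * (int (largest_part p) - int (smallest_part p)) else 0)"
  proof (rule sum.cong[OF refl])
    fix p assume p: "p \<in> partitions n"
    let ?s = "Min (set_mset p)" and ?l = "Max (set_mset p)"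
    have sub: "set_mset p \<subseteq> {1..n}" and ne: "p \<noteq> {#}" using pp[OF p] by auto
    have fin: "finite (set_mset p)" and ne': "set_mset p \<noteq> {}" using ne by auto
    have s1: "1 \<le> ?s" using sub Min_in[OF fin ne'] by auto
    have sl: "?s \<le> ?l" using fin ne' by simp
    have ln: "?l \<le> n" using sub Max_in[OF fin ne'] by auto
    have "(\<Sum>(r,t)\<in>PairsN n. (if ?s \<ge> r \<and> ?s < t \<and> t \<le> ?l then 1 else 0)) =
          int (card {z\<in>PairsN n. fst z \<le> ?s \<and> ?s < snd z \<and> snd z \<le> ?l})"
      by (simp add: case_prod_unfold sum_ind_card finite_PairsN)
    also have "\<dots> = int (?s * (?l - ?s))" using card_rt[OF s1 sl ln] by simp
    also have "\<dots> = int ?s * (int ?l - int ?s)" using sl by (simp add: of_nat_diff)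
    finally have C: "(\<Sum>(r,t)\<in>PairsN n. (if ?s \<ge> r \<and> ?s < t \<and> t \<le> ?l then 1 else 0)) = int ?s * (int ?l - int ?s)" .
    show "(\<Sum>(r,t)\<in>PairsN n. ?F p r t) = (if \<forall>x. count p x \<le> 1 then (-1) ^ num_parts p
        * int (smallest_part p) * (int (largest_part p) - int (smallest_part p)) else 0)"
    proof (cases "\<forall>x. count p x \<le> 1")
      case True
      have "(\<Sum>(r,t)\<in>PairsN n. ?F p r t) = (-1) ^ size p * (\<Sum>(r,t)\<in>PairsN n. (if ?s \<ge> r \<and> ?s < t \<and> t \<le> ?l then 1 else 0))"
        using True by (simp add: sum_distrib_left case_prod_unfold)
      then show ?thesis using True C
        by (simp add: num_parts_def smallest_part_def largest_part_def mult.assoc)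
    next
      case False
      have "(\<Sum>(r,t)\<in>PairsN n. ?F p r t) = 0"
      proof (rule sum.neutral, rule ballI)
        fix z show "(case z of (r,t) \<Rightarrow> ?F p r t) = 0"
          by (cases z) (simp only: prod.case if_not_P[OF False])
      qed
      then show ?thesis by (subst if_not_P[OF False])
    qed
  qed
  also have "\<dots> = (\<Sum>p\<in>distinct_partitions n. (-1) ^ num_parts p
        * int (smallest_part p) * (int (largest_part p) - int (smallest_part p)))"
    unfolding distinct_partitions_def
    by (rule sum.inter_filter[symmetric]) (rule finite_partitions)
  finally show ?thesis .
qed


lemma pair_count:
  assumes sub: "set_mset p \<subseteq> {1..N}"
  shows "(\<Sum>(b,a)\<in>PairsN N. if set_mset p = {b,a} then 1 else 0) = (if card (set_mset p) = 2 then 1 else (0::int))"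
proof -
  have "(\<Sum>(b,a)\<in>PairsN N. if set_mset p = {b,a} then 1 else (0::int)) =
        int (card {z\<in>PairsN N. set_mset p = {fst z, snd z}})"
    by (simp add: case_prod_unfold sum_ind_card finite_PairsN)
  also have "\<dots> = (if card (set_mset p) = 2 then 1 else 0)"
  proof (cases "card (set_mset p) = 2")
    case True
    then obtain x y where xy: "set_mset p = {x,y}" "x \<noteq> y" by (auto simp: card_2_iff)
    define u where "u = min x y"
    define v where "v = max x y"
    have uv: "set_mset p = {u,v}" "u < v" using xy unfolding u_def v_def by (auto simp: min_def max_def)
    have "{z\<in>PairsN N. set_mset p = {fst z, snd z}} = {(u,v)}"
    proof
      show "{z\<in>PairsN N. set_mset p = {fst z, snd z}} \<subseteq> {(u,v)}"
      proof
        fix z assume z: "z \<in> {z\<in>PairsN N. set_mset p = {fst z, snd z}}"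
        then have "{u,v} = {fst z, snd z}" "fst z < snd z" using uv by (auto simp: PairsN_def)
        then have "z = (u,v)" using uv(2) by (cases z) (auto simp: doubleton_eq_iff)
        then show "z \<in> {(u,v)}" by simp
      qed
      have "u \<in> {1..N}" "v \<in> {1..N}" using uv sub by auto
      then show "{(u,v)} \<subseteq> {z\<in>PairsN N. set_mset p = {fst z, snd z}}"
        using uv by (auto simp: PairsN_def)
    qed
    then show ?thesis using True by simp
  next
    case False
    have E: "{z\<in>PairsN N. set_mset p = {fst z, snd z}} = {}"
    proof (rule ccontr)
      assume "{z\<in>PairsN N. set_mset p = {fst z, snd z}} \<noteq> {}"
      then obtain z where "z \<in> PairsN N" "set_mset p = {fst z, snd z}" by blast
      then have "card (set_mset p) = 2" by (cases z) (auto simp: PairsN_def)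
      then show False using False by simp
    qed
    show ?thesis unfolding E using False by simp
  qed
  finally show ?thesis .
qed

lemma Lser_val:
  assumes n: "n > 0"
  shows "fps_nth (Lser n) n = int (p2 n)"
proof -
  have MSn: "MS {1..n} n = partitions n" by (rule MS_partitions) simp
  have pp: "\<And>p. p \<in> partitions n \<Longrightarrow> set_mset p \<subseteq> {1..n}"
    using MSn by (auto simp: MS_def)
  have "fps_nth (Lser n) n = (\<Sum>(b,a)\<in>PairsN n. \<Sum>p\<in>partitions n. \<Prod>j\<in>{1..n}. hL b a j (count p j))"
    unfolding Lser_def fps_sum_nth
    by (rule sum.cong[OF refl]) (simp only: case_prod_unfold Pser_nth MSn)
  also have "\<dots> = (\<Sum>(b,a)\<in>PairsN n. \<Sum>p\<in>partitions n. if set_mset p = {b,a} then 1 else 0)"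
  proof (rule sum.cong[OF refl])
    fix z assume z: "z \<in> PairsN n"
    obtain b a where zz: "z = (b,a)" by force
    have ba: "b \<in> {1..n}" "a \<in> {1..n}" "b \<noteq> a" using z zz by (auto simp: PairsN_def)
    have "(\<Sum>p\<in>partitions n. \<Prod>j\<in>{1..n}. hL b a j (count p j)) = (\<Sum>p\<in>partitions n. if set_mset p = {b,a} then 1 else 0)"
    proof (rule sum.cong[OF refl])
      fix p assume p: "p \<in> partitions n"
      have "(\<Prod>j\<in>{1..n}. hL b a j (count p j)) = (\<Prod>j\<in>{1..n}. if (j = b \<or> j = a) = (j \<in># p) then 1 else 0)"
      proof (rule prod.cong[OF refl])
        fix j
        show "hL b a j (count p j) = (if (j = b \<or> j = a) = (j \<in># p) then 1 else 0)"
        proof (cases "j \<in># p")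
          case True
          then have c: "count p j \<ge> 1" by (simp add: Suc_le_eq)
          then have c2: "count p j \<noteq> 0" by simp
          show ?thesis using True c c2 by (simp add: hL_def posf_def zf_def count_eq_zero_iff)
        next
          case False
          then have "count p j = 0" by (simp add: not_in_iff)
          then show ?thesis using False by (simp add: hL_def posf_def zf_def)
        qed
      qed
      also have "\<dots> = (if \<forall>j\<in>{1..n}. (j = b \<or> j = a) = (j \<in># p) then 1 else 0)"
        by (rule prod_bool) simp
      also have "(\<forall>j\<in>{1..n}. (j = b \<or> j = a) = (j \<in># p)) = (set_mset p = {b,a})"
        using pp[OF p] ba by auto
      finally show "(\<Prod>j\<in>{1..n}. hL b a j (count p j)) = (if set_mset p = {b,a} then 1 else 0)" .
    qed
    then show "(case z of (b,a) \<Rightarrow> \<Sum>p\<in>partitions n. \<Prod>j\<in>{1..n}. hL b a j (count p j)) =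
      (case z of (b,a) \<Rightarrow> \<Sum>p\<in>partitions n. if set_mset p = {b,a} then 1 else 0)" using zz by simp
  qed
  also have "\<dots> = (\<Sum>p\<in>partitions n. \<Sum>(b,a)\<in>PairsN n. if set_mset p = {b,a} then 1 else 0)"
    by (subst sum.swap) (simp add: case_prod_unfold)
  also have "\<dots> = (\<Sum>p\<in>partitions n. if card (set_mset p) = 2 then 1 else 0)"
    by (rule sum.cong[OF refl]) (use pp pair_count in blast)
  also have "\<dots> = int (card {p\<in>partitions n. card (set_mset p) = 2})"
    by (rule sum_ind_card) (rule finite_partitions)
  finally show ?thesis by (simp add: p2_def)
qed

theorem corollary2p7:
  fixes n :: nat
  assumes "n > 0"
  shows "int (p2 n) =
    (\<Sum>p\<in>distinct_partitions n. (-1) ^ num_parts p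
        * int (smallest_part p) * (int (largest_part p) - int (smallest_part p)))"
  using Lser_val[OF assms] Rser_val[OF assms] coeff_eq[of n n] by simp


end
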